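(* Let $F_n$ be a probability distribution function on $\mathbb{R}$ satisfying $F_n(x+t)-F_n(x)\le Mt$ for all $x\ge0$, $t>0$, for some constant $M<\infty$. Let $y_n^*\ge0$, and define $q_n=F_n(y_n^* )-F_n(0)$ and $L_n=\int_0^{y_n^*}x(y_n^*-x)\,dF_n(x)$. Then $$L_n\ge\frac{q_n^3}{27M^2}.$$ *)

theory Defs
  imports "HOL-Probability.Probability"
begin

end

theory Submission
  imports Defs
begin

theorem lemma9:
  fixes \<mu> :: "real measure" and M y :: real
  assumes "real_distribution \<mu>"
    and "\<And>x t. x \<ge> 0 \<Longrightarrow> t > 0 \<Longrightarrow> cdf \<mu> (x + t) - cdf \<mu> x \<le> M * t"
    and "y \<ge> 0"
  shows "(\<integral>x\<in>{0..y}. x * (y - x) \<partial>\<mu>) \<ge> (cdf \<mu> y - cdf \<mu> 0) ^ 3 / (27 * M\<^sup>2)"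
proof -
  interpret real_distribution \<mu> by fact
  define q where "q = cdf \<mu> y - cdf \<mu> 0"
  have q0: "q \<ge> 0" unfolding q_def using cdf_nondecreasing[OF assms(3)] by simp
  have int1: "integrable \<mu> (\<lambda>x. indicator {0..y} x *\<^sub>R (x * (y - x)))"
  proof (rule integrable_const_bound[where B="y*y"])
    show "AE x in \<mu>. norm (indicator {0..y} x *\<^sub>R (x * (y - x))) \<le> y * y"
    proof (intro AE_I2)
      fix x show "norm (indicator {0..y} x *\<^sub>R (x * (y - x))) \<le> y * y"
        using assms(3) by (auto simp: indicator_def abs_mult intro!: mult_mono)
    qed
  qed simp
  have L0: "0 \<le> (\<integral>x\<in>{0..y}. x * (y - x) \<partial>\<mu>)"
    unfolding set_lebesgue_integral_def
    by (rule integral_nonneg_AE) (auto simp: indicator_def)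
  show ?thesis
  proof (cases "M > 0 \<and> q > 0")
    case False
    have "q ^ 3 / (27 * M\<^sup>2) \<le> 0"
    proof (cases "M > 0")
      case True
      then have "q = 0" using False q0 by auto
      then show ?thesis by simp
    next
      case False
      have "q \<le> 0"
      proof (cases "y = 0")
        case True then show ?thesis unfolding q_def by simp
      next
        case False
        then have "q \<le> M * y" unfolding q_def using assms(2)[of 0 y] assms(3) by simp
        also have "\<dots> \<le> 0" using \<open>\<not> M > 0\<close> assms(3) by (simp add: mult_nonpos_nonneg)
        finally show ?thesis .
      qed
      then have "q = 0" using q0 by simp
      then show ?thesis by simp
    qed
    then show ?thesis using L0 unfolding q_def by simp
  next
    case True
    then have M: "M > 0" and qp: "q > 0" by auto
    define a where "a = q / (3 * M)"
    have a0: "a > 0" unfolding a_def using M qp by simp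
    have y0: "y > 0" using qp assms(3) unfolding q_def by (cases "y = 0") auto
    have qy: "q \<le> M * y" unfolding q_def using assms(2)[of 0 y] y0 by simp
    have aeq: "3 * M * a = q" unfolding a_def using M by simp
    have "M * (3 * a) \<le> M * y" using qy aeq by (simp add: algebra_simps)
    then have ay: "3 * a \<le> y" using mult_le_cancel_left_pos[OF M] by blast
    have c1: "cdf \<mu> a - cdf \<mu> 0 \<le> M * a" using assms(2)[of 0 a] a0 by simp
    have c2: "cdf \<mu> y - cdf \<mu> (y - a) \<le> M * a" using assms(2)[of "y - a" a] a0 ay by simp
    have meas: "measure \<mu> {a<..y - a} = cdf \<mu> (y - a) - cdf \<mu> a"
      using cdf_diff_eq[of a "y - a"] ay a0 by simp
    have mq: "measure \<mu> {a<..y - a} \<ge> q / 3"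
    proof -
      have e: "q / 3 = M * a" using aeq by simp
      have "measure \<mu> {a<..y - a} \<ge> q - 2 * (M * a)"
        unfolding meas q_def using c1 c2 by linarith
      then show ?thesis using e by linarith
    qed
    have pt: "indicator {a<..y - a} x *\<^sub>R (a * a) \<le> indicator {0..y} x *\<^sub>R (x * (y - x))" for x
    proof (cases "x \<in> {a<..y - a}")
      case True
      then have "a \<le> x" "a \<le> y - x" "x \<le> y" "0 \<le> x" using a0 by auto
      then have "a * a \<le> x * (y - x)" using a0 by (intro mult_mono) auto
      then show ?thesis using True \<open>x \<le> y\<close> \<open>0 \<le> x\<close> by (simp add: indicator_def)
    next
      case False then show ?thesis by (auto simp: indicator_def)
    qed
    have int2: "integrable \<mu> (\<lambda>x. indicator {a<..y - a} x *\<^sub>R (a * a))"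
      by (rule integrable_const_bound[where B="a*a"]) (auto simp: indicator_def)
    have "(\<integral>x. indicator {a<..y - a} x *\<^sub>R (a * a) \<partial>\<mu>) \<le> (\<integral>x\<in>{0..y}. x * (y - x) \<partial>\<mu>)"
      unfolding set_lebesgue_integral_def by (rule integral_mono[OF int2 int1 pt])
    moreover have "(\<integral>x. indicator {a<..y - a} x *\<^sub>R (a * a) \<partial>\<mu>) = measure \<mu> {a<..y - a} * (a * a)"
      by simp
    moreover have "q ^ 3 / (27 * M\<^sup>2) = (q / 3) * (a * a)"
      unfolding a_def using M by (simp add: field_simps power2_eq_square power3_eq_cube)
    moreover have "(q / 3) * (a * a) \<le> measure \<mu> {a<..y - a} * (a * a)"
      using mq by (intro mult_right_mono) auto
    ultimately show ?thesis unfolding q_def by linarith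
  qed
qed

end
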